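(* Let $G$ be a finite, simple, connected graph with $res_{wt}(G)=k$. Then the maximum degree of $G$ satisfies $\Delta(G)\le 2^{k-1}+k-1$.
   Context: $d(x,y)$ is the shortest-path distance. A set $W\subseteq V(G)$ is a resolving set if for every two distinct vertices $y,z$ there is $x\in W$ with $d(y,x)\ne d(z,x)$. A set $W$ is a weak total resolving set (WTR-set) if $W$ is resolving and, for every $w\in W$ and every $x\in V(G)\setminus W$, there is $w'\in W\setminus\{w\}$ with $d(x,w')\ne d(w,w')$. The weak total resolving number $res_{wt}(G)$ is the minimum positive integer $r$ such that every set of $r$ vertices of $G$ is a WTR-set for $G$. *)

theory Defs
  imports Main
begin

definition simple_graph :: "'a set \<Rightarrow> ('a \<Rightarrow> 'a \<Rightarrow> bool) \<Rightarrow> bool" where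
  "simple_graph V E \<longleftrightarrow> finite V \<and> V \<noteq> {} \<and>
     (\<forall>x y. E x y \<longrightarrow> x \<in> V \<and> y \<in> V) \<and>
     (\<forall>x y. E x y \<longrightarrow> E y x) \<and> (\<forall>x. \<not> E x x)"

fun walk :: "('a \<Rightarrow> 'a \<Rightarrow> bool) \<Rightarrow> 'a list \<Rightarrow> bool" where
  "walk E [] = True"
| "walk E [x] = True"
| "walk E (x # y # xs) = (E x y \<and> walk E (y # xs))"

definition walk_of_len :: "'a set \<Rightarrow> ('a \<Rightarrow> 'a \<Rightarrow> bool) \<Rightarrow> 'a \<Rightarrow> 'a \<Rightarrow> nat \<Rightarrow> bool" where
  "walk_of_len V E x y n \<longleftrightarrow> (\<exists>xs. xs \<noteq> [] \<and> hd xs = x \<and> last xs = y \<and> set xs \<subseteq> V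
      \<and> walk E xs \<and> length xs = Suc n)"

definition connected_graph :: "'a set \<Rightarrow> ('a \<Rightarrow> 'a \<Rightarrow> bool) \<Rightarrow> bool" where
  "connected_graph V E \<longleftrightarrow> (\<forall>x\<in>V. \<forall>y\<in>V. \<exists>n. walk_of_len V E x y n)"

definition gdist :: "'a set \<Rightarrow> ('a \<Rightarrow> 'a \<Rightarrow> bool) \<Rightarrow> 'a \<Rightarrow> 'a \<Rightarrow> nat" where
  "gdist V E x y = (LEAST n. walk_of_len V E x y n)"

definition resolving_set :: "'a set \<Rightarrow> ('a \<Rightarrow> 'a \<Rightarrow> bool) \<Rightarrow> 'a set \<Rightarrow> bool" where
  "resolving_set V E W \<longleftrightarrow> W \<subseteq> V \<and>
     (\<forall>y\<in>V. \<forall>z\<in>V. y \<noteq> z \<longrightarrow> (\<exists>x\<in>W. gdist V E y x \<noteq> gdist V E z x))"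

definition wtr_set :: "'a set \<Rightarrow> ('a \<Rightarrow> 'a \<Rightarrow> bool) \<Rightarrow> 'a set \<Rightarrow> bool" where
  "wtr_set V E W \<longleftrightarrow> resolving_set V E W \<and>
     (\<forall>w\<in>W. \<forall>x\<in>V - W. \<exists>w'\<in>W - {w}. gdist V E x w' \<noteq> gdist V E w w')"

definition res_wt :: "'a set \<Rightarrow> ('a \<Rightarrow> 'a \<Rightarrow> bool) \<Rightarrow> nat" where
  "res_wt V E = (LEAST r. 0 < r \<and> (\<forall>W. W \<subseteq> V \<and> card W = r \<longrightarrow> wtr_set V E W))"

definition degree :: "'a set \<Rightarrow> ('a \<Rightarrow> 'a \<Rightarrow> bool) \<Rightarrow> 'a \<Rightarrow> nat" where
  "degree V E x = card {y\<in>V. E x y}"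

definition max_degree :: "'a set \<Rightarrow> ('a \<Rightarrow> 'a \<Rightarrow> bool) \<Rightarrow> nat" where
  "max_degree V E = Max (degree V E ` V)"

end

theory Submission
  imports Defs
begin

lemma walk0_eq:
  assumes "walk_of_len V E x y 0" shows "x = y"
proof -
  from assms obtain xs where "xs \<noteq> []" "hd xs = x" "last xs = y" "length xs = Suc 0"
    unfolding walk_of_len_def by blast
  then show ?thesis by (cases xs) auto
qed

lemma gdist_12:
  assumes sg: "simple_graph V E" and v: "v \<in> V" and u: "u \<in> V" and s: "s \<in> V"
    and uv: "E v u" and sv: "E v s" and ne: "u \<noteq> s"
  shows "gdist V E u s = 1 \<or> gdist V E u s = 2"
proof -
  have "E u v" using sg uv unfolding simple_graph_def by blast
  hence w: "walk_of_len V E u s 2"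
    unfolding walk_of_len_def
    by (rule_tac x="[u,v,s]" in exI) (use u v s sv in auto)
  hence le: "gdist V E u s \<le> 2" unfolding gdist_def by (rule Least_le)
  have "walk_of_len V E u s (gdist V E u s)" unfolding gdist_def by (rule LeastI[of "walk_of_len V E u s", OF w])
  hence "gdist V E u s \<noteq> 0" using ne walk0_eq by metis
  with le show ?thesis by auto
qed

theorem theorem7:
  fixes V :: "'a set" and E :: "'a \<Rightarrow> 'a \<Rightarrow> bool" and k :: nat
  assumes "simple_graph V E"
    and "connected_graph V E"
    and "res_wt V E = k"
  shows "max_degree V E \<le> 2 ^ (k - 1) + k - 1"
proof (rule ccontr)
  assume contra: "\<not> ?thesis"
  have fin: "finite V" and nem: "V \<noteq> {}" using assms(1) unfolding simple_graph_def by auto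
  define P where "P = (\<lambda>r. 0 < r \<and> (\<forall>W. W \<subseteq> V \<and> card W = r \<longrightarrow> wtr_set V E W))"
  have "P (Suc (card V))" unfolding P_def
  proof (intro conjI allI impI)
    fix W assume "W \<subseteq> V \<and> card W = Suc (card V)"
    hence False using card_mono[OF fin, of W] by linarith
    thus "wtr_set V E W" ..
  qed simp
  hence Pk: "P k" using assms(3) unfolding res_wt_def P_def[symmetric] by (metis LeastI)
  hence k0: "0 < k" and allW: "\<And>W. W \<subseteq> V \<Longrightarrow> card W = k \<Longrightarrow> wtr_set V E W"
    unfolding P_def by auto
  obtain v where v: "v \<in> V" "max_degree V E = degree V E v"
  proof -
    have "Max (degree V E ` V) \<in> degree V E ` V" using Max_in[of "degree V E ` V"] fin nem by blast
    thus ?thesis using that unfolding max_degree_def by (metis imageE)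
  qed
  define N where "N = {y\<in>V. E v y}"
  have finN: "finite N" using fin N_def by auto
  have cN: "card N \<ge> 2 ^ (k - 1) + k" using contra v unfolding degree_def N_def by auto
  obtain S where S: "S \<subseteq> N" "card S = k - 1"
    using obtain_subset_with_card_n[of "k - 1" N] cN by force
  have finS: "finite S" using S finN finite_subset by blast
  define R where "R = N - S"
  have cR: "card R = card N - (k - 1)" unfolding R_def using S finS card_Diff_subset by metis
  define f where "f = (\<lambda>u. {s\<in>S. gdist V E u s = 1})"
  have "f ` R \<subseteq> Pow S" unfolding f_def by auto
  hence "card (f ` R) \<le> 2 ^ (k - 1)" using card_mono[of "Pow S" "f ` R"] finS S
    by (simp add: card_Pow)
  moreover have "card R > 2 ^ (k - 1)" using cR cN k0 by linarith
  ultimately have "\<not> inj_on f R" using card_image by fastforce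
  then obtain u1 u2 where u: "u1 \<in> R" "u2 \<in> R" "u1 \<noteq> u2" "f u1 = f u2"
    unfolding inj_on_def by blast
  have uN: "u1 \<in> N" "u2 \<in> N" "u1 \<notin> S" "u2 \<notin> S" using u R_def by auto
  have eqd: "gdist V E u2 s = gdist V E u1 s" if "s \<in> S" for s
  proof -
    have sN: "s \<in> N" using that S by auto
    have "u1 \<noteq> s" "u2 \<noteq> s" using uN that by auto
    hence a: "gdist V E u1 s = 1 \<or> gdist V E u1 s = 2" "gdist V E u2 s = 1 \<or> gdist V E u2 s = 2"
      using gdist_12[OF assms(1) v(1)] uN sN unfolding N_def by auto
    have "(gdist V E u1 s = 1) = (gdist V E u2 s = 1)"
      using u(4) that unfolding f_def by blast
    with a show ?thesis by auto
  qed
  define W where "W = insert u1 S"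
  have WV: "W \<subseteq> V" using S uN unfolding W_def N_def by auto
  have cW: "card W = k" unfolding W_def using finS uN S k0 by simp
  have "wtr_set V E W" using allW WV cW by blast
  moreover have "u2 \<in> V - W" using uN u(3) unfolding W_def N_def by auto
  ultimately obtain w' where "w' \<in> W - {u1}" "gdist V E u2 w' \<noteq> gdist V E u1 w'"
    unfolding wtr_set_def W_def by blast
  moreover have "w' \<in> S" using calculation(1) unfolding W_def by auto
  ultimately show False using eqd by blast
qed

end
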